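(* There is a class $\mathcal{C}$ of digraphs of bounded expansion such that for every constant $c$ we have $\gamma_1(G)\ge c$ for infinitely many $G\in\mathcal{C}$, and $\alpha_1(G)=2$ for all $G\in\mathcal{C}$.
   Context: Directed models and depth-$r$ minors: a digraph $H$ has a directed model in $G$ if there is a map $\delta$ assigning to each $v\in V(H)$ a subgraph $\delta(v)\subseteq G$ and to each arc $e$ of $H$ an arc $\delta(e)$ of $G$ with (1) branch sets pairwise disjoint; (2) if $e=(u,v)$ and $\delta(e)=(u',v')$ then $u'\in\delta(u)$, $v'\in\delta(v)$; (3) for each $v$, with $\mathrm{in}(\delta(v))$ (resp. $\mathrm{out}(\delta(v))$) the vertices of $\delta(v)$ on images of arcs entering (resp. leaving) $v$: every in-vertex reaches every out-vertex by a directed path in $\delta(v)$, some vertex of $\delta(v)$ reaches all out-vertices, and some vertex of $\delta(v)$ is reached from all in-vertices. $H$ is a depth-$r$ minor of $G$ if there is such a model in which all paths in branch sets have length at most $r$. $\nabla_r(G)$ is the maximum of $|E(H)|/|V(H)|$ over depth-$r$ minors $H$ of $G$; a class has bounded expansion if $\nabla_r(G)\le f(r)$ for some function $f$, all $r\ge0$, all $G$ in the class. $N_r^+(v)$ is the set of vertices $u$ such that $G$ has a directed path of length at most $r$ from $v$ to $u$ (including $v$). $\gamma_r(G)$ is the size of a smallest $X\subseteq V(G)$ with $N_r^+(X)=V(G)$. $\alpha_r(G)$ is the size of a largest set $Y\subseteq V(G)$ such that for all distinct $x,y\in Y$ there is no $u\in V(G)$ with $x,y\in N_r^+(u)$. 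*)

theory Defs
  imports Complex_Main
begin

type_synonym 'a digraph = "'a set \<times> ('a \<times> 'a) set"

definition digraph :: "'a digraph \<Rightarrow> bool" where
  "digraph G \<longleftrightarrow> finite (fst G) \<and> snd G \<subseteq> fst G \<times> fst G \<and> (\<forall>x. (x, x) \<notin> snd G)"

definition reach_within :: "nat \<Rightarrow> ('a \<times> 'a) set \<Rightarrow> 'a \<Rightarrow> 'a \<Rightarrow> bool" where
  "reach_within r A x y \<longleftrightarrow> (\<exists>k\<le>r. (x, y) \<in> A ^^ k)"

text \<open>A directed model of H in G in which all paths inside branch sets have length
  at most r. Branch set of v is the subgraph (dV v, dE v); dA maps arcs of H to arcs of G.\<close>
definition directed_model_depth ::
  "nat \<Rightarrow> 'b digraph \<Rightarrow> 'a digraph \<Rightarrow> ('b \<Rightarrow> 'a set) \<Rightarrow> ('b \<Rightarrow> ('a \<times> 'a) set)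
     \<Rightarrow> ('b \<times> 'b \<Rightarrow> 'a \<times> 'a) \<Rightarrow> bool" where
  "directed_model_depth r H G dV dE dA \<longleftrightarrow>
     (\<forall>v\<in>fst H. dV v \<subseteq> fst G \<and> dE v \<subseteq> snd G \<inter> (dV v \<times> dV v)) \<and>
     (\<forall>u\<in>fst H. \<forall>v\<in>fst H. u \<noteq> v \<longrightarrow> dV u \<inter> dV v = {}) \<and>
     (\<forall>e\<in>snd H. dA e \<in> snd G \<and> fst (dA e) \<in> dV (fst e) \<and> snd (dA e) \<in> dV (snd e)) \<and>
     (\<forall>v\<in>fst H.
        (let In = {snd (dA e) | e. e \<in> snd H \<and> snd e = v};
             Out = {fst (dA e) | e. e \<in> snd H \<and> fst e = v}
         in (\<forall>x\<in>In. \<forall>y\<in>Out. reach_within r (dE v) x y) \<and>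
            (\<exists>z\<in>dV v. \<forall>y\<in>Out. reach_within r (dE v) z y) \<and>
            (\<exists>z\<in>dV v. \<forall>x\<in>In. reach_within r (dE v) x z)))"

definition depth_minor :: "nat \<Rightarrow> 'b digraph \<Rightarrow> 'a digraph \<Rightarrow> bool" where
  "depth_minor r H G \<longleftrightarrow> digraph H \<and> (\<exists>dV dE dA. directed_model_depth r H G dV dE dA)"

text \<open>\<nabla>_r(G): maximum edge density |E(H)|/|V(H)| over depth-r minors H of G
  (minors taken up to isomorphism, represented on vertex type nat).\<close>
definition nabla :: "nat \<Rightarrow> 'a digraph \<Rightarrow> real" where
  "nabla r G = Sup {real (card (snd H)) / real (card (fst H)) | H :: nat digraph. depth_minor r H G}"

definition bounded_expansion :: "'a digraph set \<Rightarrow> bool" where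
  "bounded_expansion C \<longleftrightarrow> (\<exists>f :: nat \<Rightarrow> real. \<forall>r. \<forall>G\<in>C. nabla r G \<le> f r)"

definition out_nbhd :: "nat \<Rightarrow> 'a digraph \<Rightarrow> 'a \<Rightarrow> 'a set" where
  "out_nbhd r G v = {u \<in> fst G. reach_within r (snd G) v u}"

definition out_nbhd_set :: "nat \<Rightarrow> 'a digraph \<Rightarrow> 'a set \<Rightarrow> 'a set" where
  "out_nbhd_set r G X = (\<Union>v\<in>X. out_nbhd r G v)"

definition gamma :: "nat \<Rightarrow> 'a digraph \<Rightarrow> nat" where
  "gamma r G = (LEAST n. \<exists>X. X \<subseteq> fst G \<and> card X = n \<and> out_nbhd_set r G X = fst G)"

definition alpha :: "nat \<Rightarrow> 'a digraph \<Rightarrow> nat" where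
  "alpha r G = Max {card Y | Y. Y \<subseteq> fst G \<and>
     (\<forall>x\<in>Y. \<forall>y\<in>Y. x \<noteq> y \<longrightarrow> \<not> (\<exists>u\<in>fst G. x \<in> out_nbhd r G u \<and> y \<in> out_nbhd r G u))}"

end

theory Submission
  imports Defs "HOL-Library.Nat_Bijection"
begin

definition sa :: "nat \<Rightarrow> nat" where "sa v = fst (prod_decode ((v - 2) div 2))"
definition sb :: "nat \<Rightarrow> nat" where "sb v = snd (prod_decode ((v - 2) div 2))"
definition SS :: "nat \<Rightarrow> nat \<Rightarrow> nat" where "SS i j = 2 * prod_encode (i, j) + 2"
definition isS :: "nat \<Rightarrow> nat \<Rightarrow> bool" where
  "isS n v \<longleftrightarrow> v > 0 \<and> even v \<and> sa v < n \<and> sb v < n \<and> sa v \<noteq> sb v"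
definition isO :: "nat \<Rightarrow> nat \<Rightarrow> bool" where "isO n v \<longleftrightarrow> odd v \<and> v div 2 < n"
definition GV :: "nat \<Rightarrow> nat set" where "GV n = {0} \<union> {v. isO n v} \<union> {v. isS n v}"
definition GE :: "nat \<Rightarrow> (nat \<times> nat) set" where
  "GE n = {(0, v) | v. isS n v} \<union> {(v, 2 * sa v + 1) | v. isS n v} \<union> {(v, 2 * sb v + 1) | v. isS n v}"
definition GG :: "nat \<Rightarrow> nat digraph" where "GG n = (GV n, GE n)"

lemma sa_SS[simp]: "sa (SS i j) = i" and sb_SS[simp]: "sb (SS i j) = j"
  unfolding sa_def sb_def SS_def by simp_all

lemma SS_props[simp]: "SS i j > 0" "even (SS i j)" "SS i j \<noteq> 0"
  unfolding SS_def by simp_all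

lemma isS_SS[simp]: "isS n (SS i j) \<longleftrightarrow> i < n \<and> j < n \<and> i \<noteq> j"
  unfolding isS_def by simp

lemma isS_eq: "isS n v \<Longrightarrow> v = SS (sa v) (sb v)"
  unfolding isS_def sa_def sb_def SS_def by auto

lemma isS_fin: "finite {v. isS n v}"
proof -
  have "{v. isS n v} \<subseteq> (\<lambda>(i,j). SS i j) ` ({..<n} \<times> {..<n})"
  proof
    fix v assume "v \<in> {v. isS n v}"
    then have "isS n v" by simp
    then show "v \<in> (\<lambda>(i,j). SS i j) ` ({..<n} \<times> {..<n})"
      using isS_eq[of n v] unfolding isS_def by (intro image_eqI[of _ _ "(sa v, sb v)"]) auto
  qed
  then show ?thesis by (rule finite_subset) simp
qed

lemma isO_fin: "finite {v. isO n v}"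
proof -
  have "{v. isO n v} \<subseteq> {..2*n}" unfolding isO_def by auto
  then show ?thesis by (rule finite_subset) simp
qed

lemma GV_fin: "finite (GV n)" unfolding GV_def using isS_fin isO_fin by simp

lemma GE_cases: "(x, y) \<in> GE n \<Longrightarrow> isS n x \<and> odd y \<or> x = 0 \<and> isS n y"
  unfolding GE_def by auto

lemma digraph_GG: "digraph (GG n)"
  unfolding digraph_def GG_def
proof (simp, intro conjI)
  show "finite (GV n)" by (rule GV_fin)
  show "GE n \<subseteq> GV n \<times> GV n"
    unfolding GE_def GV_def isO_def isS_def by auto
  show "\<forall>x. (x, x) \<notin> GE n"
    using GE_cases isS_def by fastforce
qed

lemma to_zero: "(z, 0) \<in> GE n ^^ k \<Longrightarrow> z = 0"
proof (induction k arbitrary: z)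
  case 0 then show ?case by simp
next
  case (Suc k)
  then obtain y where "(z, y) \<in> GE n ^^ k" "(y, 0) \<in> GE n" by (meson relpow_Suc_E)
  then show ?case using GE_cases isS_def by fastforce
qed

lemma A1: "z \<noteq> 0 \<Longrightarrow> (z, t) \<in> GE n ^^ k \<Longrightarrow> t \<in> Domain (GE n) \<Longrightarrow> z = t"
proof (cases k)
  case 0 assume "(z, t) \<in> GE n ^^ k" then show ?thesis using 0 by simp
next
  case (Suc k')
  assume z: "z \<noteq> 0" and p: "(z, t) \<in> GE n ^^ k" and t: "t \<in> Domain (GE n)"
  obtain y where y: "(z, y) \<in> GE n ^^ k'" "(y, t) \<in> GE n" using p Suc by (meson relpow_Suc_E)
  have "isS n t \<or> t = 0" using t GE_cases by blast
  then have "y = 0" using y(2) GE_cases isS_def by fastforce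
  then show ?thesis using to_zero y(1) z by blast
qed

lemma A2: "t \<noteq> 0 \<Longrightarrow> finite {y. (t,y) \<in> GE n} \<and> card {y. (t,y) \<in> GE n} \<le> 2"
proof -
  assume "t \<noteq> 0"
  then have "{y. (t,y) \<in> GE n} \<subseteq> {2 * sa t + 1, 2 * sb t + 1}" unfolding GE_def by auto
  moreover have "card {2 * sa t + 1, 2 * sb t + 1} \<le> 2" by (simp add: card_insert_if)
  ultimately show ?thesis by (meson card_mono finite.emptyI finite.insertI finite_subset order_trans)
qed

lemma relpow_mono_sub: "(A :: ('a \<times> 'a) set) \<subseteq> B \<Longrightarrow> A ^^ k \<subseteq> B ^^ k"
  by (induction k) (auto simp: relpow.simps)

lemma model_density:
  fixes G :: "'a digraph" and H :: "'b digraph" and h :: 'a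
  assumes dH: "digraph H" and M: "directed_model_depth r H G dV dE dA"
  and A1: "\<And>z t k. z \<noteq> h \<Longrightarrow> (z,t) \<in> snd G ^^ k \<Longrightarrow> t \<in> Domain (snd G) \<Longrightarrow> z = t"
  and A2: "\<And>t. t \<noteq> h \<Longrightarrow> finite {y. (t,y) \<in> snd G} \<and> card {y. (t,y) \<in> snd G} \<le> 2"
  shows "card (snd H) \<le> 3 * card (fst H)"
proof -
  define V where "V = fst H"
  define E where "E = snd H"
  have fV: "finite V" and EV: "E \<subseteq> V \<times> V" using dH unfolding digraph_def V_def E_def by auto
  define out where "out a = {e \<in> E. fst e = a}" for a
  have Eu: "E = (\<Union>a\<in>V. out a)" using EV unfolding out_def by auto
  have fE: "finite E" using EV fV by (meson finite_SigmaI finite_subset)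
  have fout: "finite (out a)" for a
    using fE unfolding out_def by simp
  note Mu = M[unfolded directed_model_depth_def Let_def]
  have M1: "\<forall>v\<in>fst H. dV v \<subseteq> fst G \<and> dE v \<subseteq> snd G \<inter> (dV v \<times> dV v)"
    using Mu by (rule conjunct1)
  have M2: "\<forall>u\<in>fst H. \<forall>v\<in>fst H. u \<noteq> v \<longrightarrow> dV u \<inter> dV v = {}"
    using Mu by (rule conjunct1[OF conjunct2])
  have M3: "\<forall>e\<in>snd H. dA e \<in> snd G \<and> fst (dA e) \<in> dV (fst e) \<and> snd (dA e) \<in> dV (snd e)"
    using Mu by (rule conjunct1[OF conjunct2[OF conjunct2]])
  have M4': "\<forall>v\<in>fst H. (\<forall>x\<in>{snd (dA e) | e. e \<in> snd H \<and> snd e = v}. \<forall>y\<in>{fst (dA e) | e. e \<in> snd H \<and> fst e = v}. reach_within r (dE v) x y) \<and>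
            (\<exists>z\<in>dV v. \<forall>y\<in>{fst (dA e) | e. e \<in> snd H \<and> fst e = v}. reach_within r (dE v) z y) \<and>
            (\<exists>z\<in>dV v. \<forall>x\<in>{snd (dA e) | e. e \<in> snd H \<and> snd e = v}. reach_within r (dE v) x z)"
    using Mu by (rule conjunct2[OF conjunct2[OF conjunct2]])
  have M4: "\<forall>v\<in>fst H. (\<exists>z\<in>dV v. \<forall>y\<in>{fst (dA e) | e. e \<in> snd H \<and> fst e = v}. reach_within r (dE v) z y)"
    using M4' by (simp only: Ball_def) blast
  have each: "card (out a) \<le> 2 + (if h \<in> dV a then card V else 0)" if aV: "a \<in> V" for a
  proof (cases "h \<in> dV a")
    case True
    have "out a \<subseteq> {a} \<times> V" using EV unfolding out_def by auto
    then have "card (out a) \<le> card ({a} \<times> V)" using fV by (intro card_mono) auto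
    also have "\<dots> = card V" by (simp add: card_cartesian_product)
    finally show ?thesis using True by simp
  next
    case False
    obtain z where zd: "z \<in> dV a" and zr: "\<forall>y\<in>{fst (dA e) | e. e \<in> snd H \<and> fst e = a}. reach_within r (dE a) z y"
      using M4 aV V_def by blast
    have zh: "z \<noteq> h" using zd False by auto
    have fst_eq: "fst (dA e) = z" if "e \<in> out a" for e
    proof -
      have eE: "e \<in> snd H" "fst e = a" using that unfolding out_def E_def by auto
      then have "reach_within r (dE a) z (fst (dA e))" using zr by blast
      then obtain k where "(z, fst (dA e)) \<in> dE a ^^ k" unfolding reach_within_def by blast
      moreover have "dE a \<subseteq> snd G" using M1 aV V_def by blast
      ultimately have "(z, fst (dA e)) \<in> snd G ^^ k" using relpow_mono_sub by blast
      moreover have "fst (dA e) \<in> Domain (snd G)" using M3 eE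
        by (metis Domain.DomainI prod.collapse)
      ultimately show ?thesis using A1 zh by metis
    qed
    have inj: "inj_on dA (out a)"
    proof
      fix e e' assume e: "e \<in> out a" and e': "e' \<in> out a" and eq: "dA e = dA e'"
      have "e \<in> snd H" "e' \<in> snd H" "fst e = a" "fst e' = a" using e e' unfolding out_def E_def by auto
      moreover then have "snd e \<in> fst H" "snd e' \<in> fst H" using EV E_def V_def by auto
      moreover have "snd (dA e) \<in> dV (snd e)" "snd (dA e) \<in> dV (snd e')" using M3 calculation eq by metis+
      ultimately show "e = e'" using M2 by (metis disjoint_iff prod.expand)
    qed
    have sub: "dA ` out a \<subseteq> {z} \<times> {y. (z,y) \<in> snd G}"
    proof
      fix p assume "p \<in> dA ` out a"
      then obtain e where e: "e \<in> out a" "p = dA e" by blast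
      have "dA e \<in> snd G" using M3 e(1) unfolding out_def E_def by auto
      then show "p \<in> {z} \<times> {y. (z,y) \<in> snd G}" using fst_eq[OF e(1)] e(2)
        by (metis SigmaI mem_Collect_eq prod.collapse singletonI)
    qed
    have "card (out a) = card (dA ` out a)" using inj by (simp add: card_image)
    also have "\<dots> \<le> card ({z} \<times> {y. (z,y) \<in> snd G})" using A2[OF zh] sub by (intro card_mono) auto
    also have "\<dots> \<le> 2" using A2[OF zh] by (simp add: card_cartesian_product)
    finally show ?thesis by simp
  qed
  have fin1: "finite {a \<in> V. h \<in> dV a}" using fV by simp
  have one: "card {a \<in> V. h \<in> dV a} \<le> Suc 0"
    unfolding card_le_Suc0_iff_eq[OF fin1] using M2 V_def by blast
  have "card E \<le> (\<Sum>a\<in>V. card (out a))" unfolding Eu using card_UN_le[OF fV] by blast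
  also have "\<dots> \<le> (\<Sum>a\<in>V. 2 + (if h \<in> dV a then card V else 0))" using each by (intro sum_mono) auto
  also have "\<dots> = 2 * card V + (\<Sum>a\<in>V. (if h \<in> dV a then card V else 0))" by (subst sum.distrib) (simp add: mult.commute)
  also have "(\<Sum>a\<in>V. (if h \<in> dV a then card V else 0)) = card V * card {a \<in> V. h \<in> dV a}"
    using fV by (simp only: sum.inter_filter[symmetric]) simp
  also have "\<dots> \<le> card V" using mult_le_mono2[OF one, of "card V"] by simp
  finally show ?thesis unfolding E_def V_def by simp
qed


lemma into_even: "(u, v) \<in> GE n \<Longrightarrow> even v \<Longrightarrow> u = 0"
  using GE_cases by blast

lemma into_odd: "(u, 2 * i + 1) \<in> GE n \<Longrightarrow> isS n u \<and> (sa u = i \<or> sb u = i)"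
proof -
  assume a: "(u, 2 * i + 1) \<in> GE n"
  have "\<not> isS n (2 * i + 1)" unfolding isS_def by simp
  then show ?thesis using a unfolding GE_def by auto
qed

lemma SS01: "SS 0 1 \<noteq> 5"
proof
  assume "SS 0 1 = 5" then have "even (5::nat)" using SS_props(2)[of 0 1] by metis
  then show False by simp
qed

lemma reach1: "reach_within 1 A x y \<longleftrightarrow> x = y \<or> (x, y) \<in> A"
proof
  assume "reach_within 1 A x y"
  then obtain k where "k \<le> 1" "(x, y) \<in> A ^^ k" unfolding reach_within_def by blast
  then show "x = y \<or> (x, y) \<in> A" by (cases k) auto
next
  assume "x = y \<or> (x, y) \<in> A"
  then show "reach_within 1 A x y" unfolding reach_within_def
  proof (elim disjE)
    assume "x = y" then show "\<exists>k\<le>1. (x, y) \<in> A ^^ k" by (intro exI[of _ 0]) simp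
  next
    assume "(x, y) \<in> A" then show "\<exists>k\<le>1. (x, y) \<in> A ^^ k" by (intro exI[of _ 1]) simp
  qed
qed

lemma nbhd1: "out_nbhd 1 (GG n) v = {u \<in> GV n. v = u \<or> (v, u) \<in> GE n}"
  unfolding out_nbhd_def GG_def reach1 by simp

lemma nabla_GG: "nabla r (GG n) \<le> 3"
  unfolding nabla_def
proof (rule cSup_least)
  let ?H0 = "({} :: nat set, {} :: (nat \<times> nat) set)"
  have "depth_minor r ?H0 (GG n)"
    unfolding depth_minor_def digraph_def directed_model_depth_def by simp
  then show "{real (card (snd H)) / real (card (fst H)) | H :: nat digraph. depth_minor r H (GG n)} \<noteq> {}"
    by blast
next
  fix x assume "x \<in> {real (card (snd H)) / real (card (fst H)) | H :: nat digraph. depth_minor r H (GG n)}"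
  then obtain H :: "nat digraph" where x: "x = real (card (snd H)) / real (card (fst H))" and dm: "depth_minor r H (GG n)"
    by blast
  obtain dV dE dA where dH: "digraph H" and M: "directed_model_depth r H (GG n) dV dE dA"
    using dm unfolding depth_minor_def by blast
  have A1': "z = t" if "z \<noteq> 0" "(z,t) \<in> snd (GG n) ^^ k" "t \<in> Domain (snd (GG n))" for z t k
    using A1[of z t k n] that unfolding GG_def snd_conv by blast
  have A2': "finite {y. (t,y) \<in> snd (GG n)} \<and> card {y. (t,y) \<in> snd (GG n)} \<le> 2" if "t \<noteq> 0" for t
    using A2[of t n] that unfolding GG_def snd_conv by blast
  have c: "card (snd H) \<le> 3 * card (fst H)"
    by (rule model_density[OF dH M, of 0, OF A1' A2'])
  show "x \<le> 3"
  proof (cases "card (fst H) = 0")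
    case True then show ?thesis using x by simp
  next
    case False
    have "real (card (snd H)) \<le> 3 * real (card (fst H))" using c by linarith
    then show ?thesis using x False by (simp add: divide_le_eq)
  qed
qed

lemma dom_bound:
  assumes XV: "X \<subseteq> GV n" and D: "out_nbhd_set 1 (GG n) X = GV n"
  shows "n \<le> 3 * card X"
proof -
  have fX: "finite X" using XV GV_fin finite_subset by blast
  have sub: "(\<lambda>i. 2 * i + 1) ` {..<n} \<subseteq> (\<Union>v\<in>X. {v, 2 * sa v + 1, 2 * sb v + 1})"
  proof
    fix u assume "u \<in> (\<lambda>i. 2 * i + 1) ` {..<n}"
    then obtain i where i: "i < n" "u = 2 * i + 1" by blast
    then have "u \<in> GV n" unfolding GV_def isO_def by simp
    then have "u \<in> out_nbhd_set 1 (GG n) X" using D by simp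
    then obtain v where v: "v \<in> X" "v = u \<or> (v, u) \<in> GE n"
      unfolding out_nbhd_set_def nbhd1 by blast
    have "u \<in> {v, 2 * sa v + 1, 2 * sb v + 1}"
      using v(2) i(2) into_odd[of v i n] by auto
    then show "u \<in> (\<Union>v\<in>X. {v, 2 * sa v + 1, 2 * sb v + 1})" using v(1) by blast
  qed
  have "n = card ((\<lambda>i. 2 * i + 1) ` {..<n})" by (simp add: card_image inj_on_def)
  also have "\<dots> \<le> card (\<Union>v\<in>X. {v, 2 * sa v + 1, 2 * sb v + 1})"
    using sub fX by (intro card_mono) auto
  also have "\<dots> \<le> (\<Sum>v\<in>X. card {v, 2 * sa v + 1, 2 * sb v + 1})" by (rule card_UN_le[OF fX])
  also have "\<dots> \<le> (\<Sum>v\<in>X. 3)" by (intro sum_mono) (simp add: card_insert_if)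
  finally show ?thesis by simp
qed

lemma gamma_GG: "n \<le> 3 * gamma 1 (GG n)"
proof -
  have ex: "\<exists>m X. X \<subseteq> fst (GG n) \<and> card X = m \<and> out_nbhd_set 1 (GG n) X = fst (GG n)"
    by (rule exI[of _ "card (GV n)"], rule exI[of _ "GV n"]) (unfold out_nbhd_set_def nbhd1, auto simp: GG_def)
  obtain X where "X \<subseteq> fst (GG n)" "card X = gamma 1 (GG n)" "out_nbhd_set 1 (GG n) X = fst (GG n)"
    using LeastI_ex[OF ex] unfolding gamma_def by blast
  then show ?thesis using dom_bound[of X n] by (simp add: GG_def)
qed

lemma alpha_GG:
  assumes n: "n \<ge> 3"
  shows "alpha 1 (GG n) = 2"
proof -
  define P where "P Y \<longleftrightarrow> (\<forall>x\<in>Y. \<forall>y\<in>Y. x \<noteq> y \<longrightarrow> \<not> (\<exists>u\<in>GV n. x \<in> out_nbhd 1 (GG n) u \<and> y \<in> out_nbhd 1 (GG n) u))" for Y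
  define M where "M = {card Y | Y. Y \<subseteq> GV n \<and> P Y}"
  have fstGG: "fst (GG n) = GV n" by (simp add: GG_def)
  have aM: "alpha 1 (GG n) = Max M" unfolding alpha_def M_def P_def fstGG by (rule refl)
  have le2: "card Y \<le> 2" if Y: "Y \<subseteq> GV n" "P Y" for Y
  proof -
    have fY: "finite Y" using Y GV_fin finite_subset by blast
    have Pd: False if "x \<in> Y" "y \<in> Y" "x \<noteq> y" "u \<in> GV n" "x \<in> out_nbhd 1 (GG n) u" "y \<in> out_nbhd 1 (GG n) u" for x y u
    proof -
      have "\<not> (\<exists>u\<in>GV n. x \<in> out_nbhd 1 (GG n) u \<and> y \<in> out_nbhd 1 (GG n) u)"
        using Y(2) that(1-3) unfolding P_def by blast
      then show False using that(4-6) by blast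
    qed
    define A where "A = {y \<in> Y. y = 0 \<or> isS n y}"
    define B where "B = {y \<in> Y. isO n y}"
    have YAB: "Y = A \<union> B" using Y(1) unfolding A_def B_def GV_def by auto
    have cA: "card A \<le> Suc 0"
    proof (subst card_le_Suc0_iff_eq)
      show "finite A" using fY A_def by simp
      show "\<forall>a1\<in>A. \<forall>a2\<in>A. a1 = a2"
      proof (intro ballI, rule ccontr)
        fix a1 a2 assume a: "a1 \<in> A" "a2 \<in> A" "a1 \<noteq> a2"
        have "a1 \<in> out_nbhd 1 (GG n) 0" "a2 \<in> out_nbhd 1 (GG n) 0"
          using a Y(1) unfolding nbhd1 A_def GE_def by auto
        moreover have "0 \<in> GV n" unfolding GV_def by simp
        ultimately show False using Pd[of a1 a2 0] a unfolding A_def by blast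
      qed
    qed
    have cB: "card B \<le> Suc 0"
    proof (subst card_le_Suc0_iff_eq)
      show "finite B" using fY B_def by simp
      show "\<forall>a1\<in>B. \<forall>a2\<in>B. a1 = a2"
      proof (intro ballI, rule ccontr)
        fix a1 a2 assume a: "a1 \<in> B" "a2 \<in> B" "a1 \<noteq> a2"
        define i where "i = a1 div 2"
        define j where "j = a2 div 2"
        have o: "odd a1" "odd a2" "i < n" "j < n" using a unfolding B_def isO_def i_def j_def by auto
        have e1: "a1 = 2 * i + 1" "a2 = 2 * j + 1" using o unfolding i_def j_def by simp_all
        have ij: "i \<noteq> j" using e1 a(3) by auto
        have sS: "isS n (SS i j)" using o ij by simp
        have "(SS i j, a1) \<in> GE n" "(SS i j, a2) \<in> GE n"
          unfolding GE_def using sS e1 by (auto intro!: exI[of _ "SS i j"])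
        moreover have "a1 \<in> GV n" "a2 \<in> GV n" using a Y(1) unfolding B_def by auto
        moreover have "SS i j \<in> GV n" using sS unfolding GV_def by simp
        ultimately have "a1 \<in> out_nbhd 1 (GG n) (SS i j)" "a2 \<in> out_nbhd 1 (GG n) (SS i j)"
          unfolding nbhd1 by blast+
        then show False using Pd[of a1 a2 "SS i j"] a \<open>SS i j \<in> GV n\<close> unfolding B_def by blast
      qed
    qed
    have "card Y \<le> card A + card B" unfolding YAB by (rule card_Un_le)
    then show ?thesis using cA cB by simp
  qed
  have fM: "finite M"
  proof -
    have "M \<subseteq> {..card (GV n)}"
    proof
      fix m assume "m \<in> M"
      then obtain Y where "m = card Y" "Y \<subseteq> GV n" unfolding M_def by blast
      then show "m \<in> {..card (GV n)}" using card_mono[OF GV_fin] by simp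
    qed
    then show ?thesis by (rule finite_subset) simp
  qed
  define Y0 where "Y0 = {SS 0 1, 5}"
  have Y0V: "Y0 \<subseteq> GV n" unfolding Y0_def GV_def isO_def using n by simp
  have nocommon: False if u1: "SS 0 1 = u \<or> (u, SS 0 1) \<in> GE n" and u2: "5 = u \<or> (u, 5) \<in> GE n" for u
  proof -
    have "u = SS 0 1 \<or> u = 0" using u1 into_even[of u "SS 0 1" n] by auto
    moreover have "u = 5 \<or> (isS n u \<and> (sa u = 2 \<or> sb u = 2))"
      using u2 into_odd[of u 2 n] by auto
    ultimately show False using SS01 unfolding isS_def by auto
  qed
  have PY0: "P Y0"
    unfolding P_def
  proof (intro ballI impI notI)
    fix x y assume xy: "x \<in> Y0" "y \<in> Y0" "x \<noteq> y"
      and "\<exists>u\<in>GV n. x \<in> out_nbhd 1 (GG n) u \<and> y \<in> out_nbhd 1 (GG n) u"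
    then obtain u where "x \<in> out_nbhd 1 (GG n) u" "y \<in> out_nbhd 1 (GG n) u" by blast
    then have hx: "u = x \<or> (u, x) \<in> GE n" and hy: "u = y \<or> (u, y) \<in> GE n" unfolding nbhd1 by auto
    have "(x = SS 0 1 \<and> y = 5) \<or> (x = 5 \<and> y = SS 0 1)" using xy unfolding Y0_def by auto
    then show False
    proof
      assume "x = SS 0 1 \<and> y = 5" then show False using nocommon[of u] hx hy by metis
    next
      assume "x = 5 \<and> y = SS 0 1" then show False using nocommon[of u] hx hy by metis
    qed
  qed
  have c2: "card Y0 = 2" unfolding Y0_def using SS01 by simp
  have "card Y0 \<in> M" unfolding M_def using Y0V PY0 by blast
  then have "2 \<in> M" using c2 by simp
  moreover have "\<forall>m\<in>M. m \<le> 2" using le2 unfolding M_def by blast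
  ultimately show ?thesis unfolding aM using fM by (intro Max_eqI) auto
qed

lemma GV_odd: "2 * m + 1 \<in> GV n \<longleftrightarrow> m < n"
  unfolding GV_def isO_def isS_def by auto

lemma inj_GG: "inj GG"
proof
  fix a b assume "GG a = GG b"
  then have "GV a = GV b" unfolding GG_def by simp
  then have "\<forall>m. m < a \<longleftrightarrow> m < b" using GV_odd by metis
  then show "a = b" by (metis linorder_neqE_nat less_irrefl)
qed

theorem mainTheorem6:
  shows "\<exists>C :: nat digraph set.
           (\<forall>G\<in>C. digraph G) \<and> bounded_expansion C \<and>
           (\<forall>c::nat. infinite {G \<in> C. gamma 1 G \<ge> c}) \<and>
           (\<forall>G\<in>C. alpha 1 G = 2)"
proof (rule exI[of _ "GG ` {3..}"], intro conjI)
  show "\<forall>G\<in>GG ` {3..}. digraph G" using digraph_GG by blast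
  show "bounded_expansion (GG ` {3..})"
    unfolding bounded_expansion_def using nabla_GG by (intro exI[of _ "\<lambda>_. 3"]) blast
  show "\<forall>G\<in>GG ` {3..}. alpha 1 G = 2" using alpha_GG by auto
  show "\<forall>c::nat. infinite {G \<in> GG ` {3..}. gamma 1 G \<ge> c}"
  proof
    fix c :: nat
    have "GG ` {3 * c + 3..} \<subseteq> {G \<in> GG ` {3..}. gamma 1 G \<ge> c}"
    proof
      fix G assume "G \<in> GG ` {3 * c + 3..}"
      then obtain k where k: "k \<ge> 3 * c + 3" "G = GG k" by auto
      then have "c \<le> gamma 1 G" using gamma_GG[of k] by simp
      then show "G \<in> {G \<in> GG ` {3..}. gamma 1 G \<ge> c}" using k by auto
    qed
    moreover have "infinite (GG ` {3 * c + 3..})"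
      using inj_GG infinite_Ici by (metis finite_imageD inj_on_subset subset_UNIV)
    ultimately show "infinite {G \<in> GG ` {3..}. gamma 1 G \<ge> c}" using finite_subset by blast
  qed
qed

end
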